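(* Let $K_1,K_2\ge1$ be integers, $n\ge0$, let $P_n(x,y),Q_n(x,y)$ be real polynomials of degree $n$, and let $\mathrm{a}_1,\ldots,\mathrm{a}_{K_1},\mathrm{b}_1,\ldots,\mathrm{b}_{K_2}$ be nonzero real numbers with $\mathrm{a}_j\ne\mathrm{a}_\ell$ and $\mathrm{b}_j\neq\mathrm{b}_\ell$ for $j\ne\ell$. For $0<r<\rho:=\min_{j,k}\{|\mathrm{a}_j|,|\mathrm{b}_k|\}$ let $\gamma_r=\{(x,y):x^2+y^2=r^2\}$ and \[ I(r)=\int_{\gamma_r}\frac{Q_n(x,y)\,dx-P_n(x,y)\,dy}{\prod_{j=1}^{K_1}(x-\mathrm{a}_j)\prod_{k=1}^{K_2}(y-\mathrm{b}_k)}. \] Then there exist real polynomials $U^{j,k}(\rho),V^{j,k}(\rho)$ ($j=1,\ldots,K_1$, $k=1,\ldots,K_2$) of degree at most $[n/2]+1$ and a real polynomial $W(\rho)$ of degree at most $[(n-1)/2]$ such that for all $0<r<\rho$, \[ I(r)=\sum_{j=1}^{K_1}\left(\sum_{k=1}^{K_2}\frac{U^{j,k}(r^2)}{\mathrm{a}_j^2+\mathrm{b}_k^2-r^2}\right)\frac{1}{\sqrt{\mathrm{a}_j^2-r^2}}+\sum_{k=1}^{K_2}\left(\sum_{j=1}^{K_1}\frac{V^{j,k}(r^2)}{\mathrm{a}_j^2+\mathrm{b}_k^2-r^2}\right)\frac{1}{\sqrt{\mathrm{b}_k^2-r^2}}+W(r^2). \]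
   Context: $[s]$ denotes the integer part of $s$ (so $[(n-1)/2]=-1$ when $n=0$, meaning $W=0$). The circle $\gamma_r$ is parametrized by $(r\cos\theta,r\sin\theta)$, $\theta\in[0,2\pi]$. *)

theory Defs
  imports "HOL-Analysis.Analysis" "HOL-Computational_Algebra.Polynomial"
begin

text \<open>A real polynomial in two variables of total degree at most n is represented by
its coefficient function c, where c i j is the coefficient of x^i y^j; only the
coefficients with i + j \<le> n are used.\<close>
definition bipoly_eval :: "nat \<Rightarrow> (nat \<Rightarrow> nat \<Rightarrow> real) \<Rightarrow> real \<Rightarrow> real \<Rightarrow> real" where
  "bipoly_eval n c x y = (\<Sum>i\<le>n. \<Sum>j\<le>n - i. c i j * x ^ i * y ^ j)"

text \<open>The line integral over the circle of radius r, parametrized by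
(r cos t, r sin t), t in [0, 2 pi], of (Q dx - P dy) / (prod (x - a_j) prod (y - b_k)).\<close>
definition circle_integral_I ::
  "nat \<Rightarrow> (nat \<Rightarrow> nat \<Rightarrow> real) \<Rightarrow> (nat \<Rightarrow> nat \<Rightarrow> real) \<Rightarrow> nat \<Rightarrow> nat
     \<Rightarrow> (nat \<Rightarrow> real) \<Rightarrow> (nat \<Rightarrow> real) \<Rightarrow> real \<Rightarrow> real" where
  "circle_integral_I n P Q K1 K2 a b r =
     integral {0..2*pi} (\<lambda>t.
       (bipoly_eval n Q (r * cos t) (r * sin t) * (- r * sin t)
        - bipoly_eval n P (r * cos t) (r * sin t) * (r * cos t))
       / ((\<Prod>j=1..K1. r * cos t - a j) * (\<Prod>k=1..K2. r * sin t - b k)))"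

end

theory Submission
  imports Defs
begin

lemma integral_reflect_ab:
  fixes f :: "real \<Rightarrow> real"
  shows "integral {a..b} (\<lambda>t. f (a + b - t)) = integral {a..b} f"
proof -
  have "integral {a..b} (\<lambda>t. f (a + b - t)) = integral {-b..-a} (\<lambda>x. f (a + b + x))"
  proof -
    have "integral {-(-a)..-(-b)} (\<lambda>x. f (a + b + -x)) = integral {-b..-a} (\<lambda>x. f (a + b + x))"
      using Henstock_Kurzweil_Integration.integral_reflect_real[where a="-b" and b="-a" and f="\<lambda>x. f (a + b + x)"] by (simp only: minus_minus)
    then show ?thesis by (simp only: minus_minus diff_conv_add_uminus)
  qed
  also have "\<dots> = integral {-b + (a+b)..-a + (a+b)} f"
    using integral_shift_Icc_real[of "-b" "-a" f "a+b"] by (simp add: o_def add.commute)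
  finally show ?thesis by simp
qed

lemma integral_antisym_zero:
  fixes f :: "real \<Rightarrow> real"
  assumes "\<And>t. t \<in> {a..b} \<Longrightarrow> f (a + b - t) = - f t"
  shows "integral {a..b} f = 0"
proof -
  have "integral {a..b} f = integral {a..b} (\<lambda>t. f (a + b - t))"
    by (rule integral_reflect_ab[symmetric])
  also have "\<dots> = integral {a..b} (\<lambda>t. - f t)"
    by (rule integral_cong) (use assms in auto)
  also have "\<dots> = - integral {a..b} f" by simp
  finally show ?thesis by simp
qed



lemma J_deriv:
  fixes c r s t :: real
  assumes cr: "c > \<bar>r\<bar>" and s: "s = sqrt (c\<^sup>2 - r\<^sup>2)"
  shows "((\<lambda>t. t + 2 * arctan (r * sin t / (c + s - r * cos t))) has_real_derivative s / (c - r * cos t)) (at t)"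
proof -
  have rc: "\<bar>r * cos t\<bar> \<le> \<bar>r\<bar>" using abs_cos_le_one[of t]
    by (simp add: abs_mult mult_left_le)
  have rc2: "r^2 < c^2"
  proof -
    have "\<bar>r\<bar>^2 < c^2" using cr by (intro power_strict_mono) auto
    thus ?thesis by simp
  qed
  have spos: "s > 0" using rc2 s by simp
  have s2: "s^2 = c^2 - r^2" using s rc2 by simp
  define D where "D = c + s - r * cos t"
  have D: "D > 0" using rc spos cr unfolding D_def by linarith
  have E: "c - r * cos t > 0" using rc cr by linarith
  have sc: "sin t ^ 2 + cos t ^ 2 = 1" by simp
  have k1: "D^2 + (r * sin t)^2 = 2 * (c + s) * (c - r * cos t)"
    unfolding D_def using s2 sc by algebra
  have k2: "cos t * r * D - r * sin t * (sin t * r) = (c + s) * (r * cos t - c + s)"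
    unfolding D_def using s2 sc by algebra
  have cs: "c + s > 0" using cr spos by linarith
  have alg: "1 + 2 * (inverse (1 + (r * sin t / D)^2) * ((cos t * r * D - r * sin t * (sin t * r)) / (D * D)))
       = s / (c - r * cos t)"
  proof -
    have "1 + (r * sin t / D)^2 = (D^2 + (r * sin t)^2) / D^2" using D by (simp add: field_simps)
    also have "\<dots> = 2 * (c + s) * (c - r * cos t) / D^2" using k1 by simp
    finally have e1: "1 + (r * sin t / D)^2 = 2 * (c + s) * (c - r * cos t) / D^2" .
    have e2: "inverse (2 * (c + s) * (c - r * cos t) / D^2) * ((c + s) * (r * cos t - c + s) / (D * D))
        = (r * cos t - c + s) / (2 * (c - r * cos t))"
    proof -
      have gen: "\<And>A B X Y :: real. A \<noteq> 0 \<Longrightarrow> B \<noteq> 0 \<Longrightarrow> Y \<noteq> 0 \<Longrightarrow>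
          inverse (2 * B * Y / A^2) * (B * X / (A * A)) = X / (2 * Y)"
        by (simp add: field_simps power2_eq_square)
      show ?thesis by (rule gen) (use D E cs in auto)
    qed
    have e3: "1 + 2 * ((r * cos t - c + s) / (2 * (c - r * cos t))) = s / (c - r * cos t)"
      using E by (simp add: field_simps)
    show ?thesis unfolding e1 k2 e2 e3 ..
  qed
  show ?thesis
    apply (rule derivative_eq_intros refl)+
    using D alg unfolding D_def by (auto simp: algebra_simps)
qed

lemma K_deriv:
  fixes c r s t :: real
  assumes cr: "c > \<bar>r\<bar>" and s: "s = sqrt (c\<^sup>2 - r\<^sup>2)"
  shows "((\<lambda>t. t - 2 * arctan (r * cos t / (c + s - r * sin t))) has_real_derivative s / (c - r * sin t)) (at t)"
proof -
  have rc: "\<bar>r * sin t\<bar> \<le> \<bar>r\<bar>" using abs_sin_le_one[of t]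
    by (simp add: abs_mult mult_left_le)
  have rc2: "r^2 < c^2"
  proof -
    have "\<bar>r\<bar>^2 < c^2" using cr by (intro power_strict_mono) auto
    thus ?thesis by simp
  qed
  have spos: "s > 0" using rc2 s by simp
  have s2: "s^2 = c^2 - r^2" using s rc2 by simp
  define D where "D = c + s - r * sin t"
  have D: "D > 0" using rc spos cr unfolding D_def by linarith
  have E: "c - r * sin t > 0" using rc cr by linarith
  have sc: "sin t ^ 2 + cos t ^ 2 = 1" by simp
  have k1: "D^2 + (r * cos t)^2 = 2 * (c + s) * (c - r * sin t)"
    unfolding D_def using s2 sc by algebra
  have k2: "- sin t * r * D - r * cos t * (- (cos t * r)) = (c + s) * (c - s - r * sin t)"
    unfolding D_def using s2 sc by algebra
  have cs: "c + s > 0" using cr spos by linarith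
  have alg: "1 - 2 * (inverse (1 + (r * cos t / D)^2) * ((- sin t * r * D - r * cos t * (- (cos t * r))) / (D * D)))
       = s / (c - r * sin t)"
  proof -
    have "1 + (r * cos t / D)^2 = (D^2 + (r * cos t)^2) / D^2" using D by (simp add: field_simps)
    also have "\<dots> = 2 * (c + s) * (c - r * sin t) / D^2" using k1 by simp
    finally have e1: "1 + (r * cos t / D)^2 = 2 * (c + s) * (c - r * sin t) / D^2" .
    have e2: "inverse (2 * (c + s) * (c - r * sin t) / D^2) * ((c + s) * (c - s - r * sin t) / (D * D))
        = (c - s - r * sin t) / (2 * (c - r * sin t))"
    proof -
      have gen: "\<And>A B X Y :: real. A \<noteq> 0 \<Longrightarrow> B \<noteq> 0 \<Longrightarrow> Y \<noteq> 0 \<Longrightarrow>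
          inverse (2 * B * Y / A^2) * (B * X / (A * A)) = X / (2 * Y)"
        by (simp add: field_simps power2_eq_square)
      show ?thesis by (rule gen) (use D E cs in auto)
    qed
    have e3: "1 - 2 * ((c - s - r * sin t) / (2 * (c - r * sin t))) = s / (c - r * sin t)"
      using E by (simp add: field_simps)
    show ?thesis unfolding e1 k2 e2 e3 ..
  qed
  show ?thesis
    apply (rule derivative_eq_intros refl)+
    using D alg unfolding D_def by (auto simp: algebra_simps)
qed

lemma J_int_pos:
  fixes c r :: real
  assumes cr: "c > \<bar>r\<bar>"
  shows "((\<lambda>t. 1 / (c - r * cos t)) has_integral 2 * pi / sqrt (c\<^sup>2 - r\<^sup>2)) {0..2*pi}"
proof -
  define s where "s = sqrt (c\<^sup>2 - r\<^sup>2)"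
  have rc2: "r^2 < c^2"
  proof -
    have "\<bar>r\<bar>^2 < c^2" using cr by (intro power_strict_mono) auto
    thus ?thesis by simp
  qed
  have spos: "s > 0" using rc2 s_def by simp
  define G where "G = (\<lambda>t. t + 2 * arctan (r * sin t / (c + s - r * cos t)))"
  have "((\<lambda>t. s / (c - r * cos t)) has_integral (G (2*pi) - G 0)) {0..2*pi}"
    apply (rule fundamental_theorem_of_calculus)
    using J_deriv[OF cr s_def] unfolding G_def
    by (auto simp: has_real_derivative_iff_has_vector_derivative intro: has_vector_derivative_at_within)
  then have "((\<lambda>t. s / (c - r * cos t)) has_integral 2 * pi) {0..2*pi}"
    unfolding G_def by simp
  then have "((\<lambda>t. (1/s) * (s / (c - r * cos t))) has_integral (1/s) * (2 * pi)) {0..2*pi}"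
    by (rule has_integral_mult_right)
  then show ?thesis using spos unfolding s_def[symmetric] by simp
qed

lemma K_int_pos:
  fixes c r :: real
  assumes cr: "c > \<bar>r\<bar>"
  shows "((\<lambda>t. 1 / (c - r * sin t)) has_integral 2 * pi / sqrt (c\<^sup>2 - r\<^sup>2)) {0..2*pi}"
proof -
  define s where "s = sqrt (c\<^sup>2 - r\<^sup>2)"
  have rc2: "r^2 < c^2"
  proof -
    have "\<bar>r\<bar>^2 < c^2" using cr by (intro power_strict_mono) auto
    thus ?thesis by simp
  qed
  have spos: "s > 0" using rc2 s_def by simp
  define G where "G = (\<lambda>t. t - 2 * arctan (r * cos t / (c + s - r * sin t)))"
  have "((\<lambda>t. s / (c - r * sin t)) has_integral (G (2*pi) - G 0)) {0..2*pi}"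
    apply (rule fundamental_theorem_of_calculus)
    using K_deriv[OF cr s_def] unfolding G_def
    by (auto simp: has_real_derivative_iff_has_vector_derivative intro: has_vector_derivative_at_within)
  then have "((\<lambda>t. s / (c - r * sin t)) has_integral 2 * pi) {0..2*pi}"
    unfolding G_def by simp
  then have "((\<lambda>t. (1/s) * (s / (c - r * sin t))) has_integral (1/s) * (2 * pi)) {0..2*pi}"
    by (rule has_integral_mult_right)
  then show ?thesis using spos unfolding s_def[symmetric] by simp
qed

lemma trig_refl:
  fixes t :: real
  shows "sin (2*pi - t) = - sin t" "cos (2*pi - t) = cos t"
    "sin (pi - t) = sin t" "cos (pi - t) = - cos t"
    "sin (3*pi - t) = sin t" "cos (3*pi - t) = - cos t"
proof -
  have a: "sin (3*pi) = 0" "cos (3*pi) = -1"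
  proof -
    have "3*pi = pi + 2*pi" by simp
    then show "sin (3*pi) = 0" "cos (3*pi) = -1" by (simp_all only: sin_periodic cos_periodic) simp_all
  qed
  show "sin (2*pi - t) = - sin t" "cos (2*pi - t) = cos t"
    "sin (pi - t) = sin t" "cos (pi - t) = - cos t"
    by (simp_all add: sin_diff cos_diff)
  show "sin (3*pi - t) = sin t" "cos (3*pi - t) = - cos t"
    by (simp_all add: sin_diff cos_diff a)
qed

lemma R1:
  fixes f :: "real \<Rightarrow> real"
  assumes "\<And>t. f (2*pi - t) = - f t"
  shows "integral {0..2*pi} f = 0"
  using integral_antisym_zero[of 0 "2*pi" f] assms by simp

lemma R2:
  fixes f :: "real \<Rightarrow> real"
  assumes "\<And>t. f (pi - t) = - f t" "\<And>t. f (3*pi - t) = - f t"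
    and "f integrable_on {0..2*pi}"
  shows "integral {0..2*pi} f = 0"
proof -
  have "integral {0..pi} f = 0"
    using integral_antisym_zero[of 0 pi f] assms(1) by simp
  moreover have "integral {pi..2*pi} f = 0"
    using integral_antisym_zero[of pi "2*pi" f] assms(2) by (simp add: algebra_simps)
  moreover have "integral {0..pi} f + integral {pi..2*pi} f = integral {0..2*pi} f"
    by (rule Henstock_Kurzweil_Integration.integral_combine) (use assms(3) in auto)
  ultimately show ?thesis by simp
qed

lemma nz_cos: "0 \<le> r \<Longrightarrow> r < \<bar>c\<bar> \<Longrightarrow> r * cos t - c \<noteq> (0::real)"
proof
  assume h: "0 \<le> r" "r < \<bar>c\<bar>" "r * cos t - c = 0"
  have "\<bar>r * cos t\<bar> \<le> r" using h(1) abs_cos_le_one[of t] by (simp add: abs_mult mult_left_le)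
  then show False using h by auto
qed

lemma nz_sin: "0 \<le> r \<Longrightarrow> r < \<bar>c\<bar> \<Longrightarrow> r * sin t - c \<noteq> (0::real)"
proof
  assume h: "0 \<le> r" "r < \<bar>c\<bar>" "r * sin t - c = 0"
  have "\<bar>r * sin t\<bar> \<le> r" using h(1) abs_sin_le_one[of t] by (simp add: abs_mult mult_left_le)
  then show False using h by auto
qed

lemma nz_cos': "0 \<le> r \<Longrightarrow> r < \<bar>c\<bar> \<Longrightarrow> r * cos t \<noteq> (c::real)"
  using nz_cos by fastforce
lemma nz_sin': "0 \<le> r \<Longrightarrow> r < \<bar>c\<bar> \<Longrightarrow> r * sin t \<noteq> (c::real)"
  using nz_sin by fastforce

lemma mom_zero:
  fixes r :: real
  assumes "odd (m + h)"
  shows "integral {0..2*pi} (\<lambda>t. (r * cos t)^m * (r * sin t)^h) = 0"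
proof (cases "odd h")
  case True
  show ?thesis by (rule R1) (use True in \<open>simp add: trig_refl power_minus_odd\<close>)
next
  case False
  then have "odd m" using assms by auto
  then show ?thesis
    by (intro R2 integrable_continuous_real continuous_intros) (simp_all add: trig_refl power_minus_odd)
qed

lemma Y_odd:
  fixes r d :: real
  assumes "odd m" "0 \<le> r" "r < \<bar>d\<bar>"
  shows "integral {0..2*pi} (\<lambda>t. (r * cos t)^m / (r * sin t - d)) = 0"
  using assms
  by (intro R2 integrable_continuous_real continuous_intros) (simp_all add: trig_refl power_minus_odd nz_sin')

lemma X_odd:
  fixes r c :: real
  assumes "odd h"
  shows "integral {0..2*pi} (\<lambda>t. (r * sin t)^h / (r * cos t - c)) = 0"
  using assms by (intro R1) (simp add: trig_refl power_minus_odd)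

definition jc :: "real \<Rightarrow> real" where "jc c = (if c > 0 then - 2 * pi else 2 * pi)"

lemma J_int:
  fixes c r :: real
  assumes "\<bar>r\<bar> < \<bar>c\<bar>"
  shows "((\<lambda>t. 1 / (r * cos t - c)) has_integral jc c / sqrt (c\<^sup>2 - r\<^sup>2)) {0..2*pi}"
proof (cases "c > 0")
  case True
  have "((\<lambda>t. - (1 / (c - r * cos t))) has_integral - (2 * pi / sqrt (c\<^sup>2 - r\<^sup>2))) {0..2*pi}"
    using J_int_pos[of r c] assms True by (intro has_integral_neg) auto
  moreover have "(\<lambda>t. - (1 / (c - r * cos t))) = (\<lambda>t. 1 / (r * cos t - c))"
    by (rule ext) (simp add: minus_divide_right)
  ultimately show ?thesis using True unfolding jc_def by simp
next
  case False
  then have c: "c < 0" using assms by auto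
  have "((\<lambda>t. 1 / (- c - (- r) * cos t)) has_integral 2 * pi / sqrt ((-c)\<^sup>2 - (-r)\<^sup>2)) {0..2*pi}"
    using J_int_pos[of "-r" "-c"] assms c by auto
  moreover have "(\<lambda>t. 1 / (- c - (- r) * cos t)) = (\<lambda>t. 1 / (r * cos t - c))"
    by (rule ext) (simp add: algebra_simps)
  ultimately show ?thesis using c unfolding jc_def by simp
qed

lemma K_int:
  fixes c r :: real
  assumes "\<bar>r\<bar> < \<bar>c\<bar>"
  shows "((\<lambda>t. 1 / (r * sin t - c)) has_integral jc c / sqrt (c\<^sup>2 - r\<^sup>2)) {0..2*pi}"
proof (cases "c > 0")
  case True
  have "((\<lambda>t. - (1 / (c - r * sin t))) has_integral - (2 * pi / sqrt (c\<^sup>2 - r\<^sup>2))) {0..2*pi}"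
    using K_int_pos[of r c] assms True by (intro has_integral_neg) auto
  moreover have "(\<lambda>t. - (1 / (c - r * sin t))) = (\<lambda>t. 1 / (r * sin t - c))"
    by (rule ext) (simp add: minus_divide_right)
  ultimately show ?thesis using True unfolding jc_def by simp
next
  case False
  then have c: "c < 0" using assms by auto
  have "((\<lambda>t. 1 / (- c - (- r) * sin t)) has_integral 2 * pi / sqrt ((-c)\<^sup>2 - (-r)\<^sup>2)) {0..2*pi}"
    using K_int_pos[of "-r" "-c"] assms c by auto
  moreover have "(\<lambda>t. 1 / (- c - (- r) * sin t)) = (\<lambda>t. 1 / (r * sin t - c))"
    by (rule ext) (simp add: algebra_simps)
  ultimately show ?thesis using c unfolding jc_def by simp
qed

definition gform :: "nat \<Rightarrow> nat \<Rightarrow> (nat \<Rightarrow> real) \<Rightarrow> (nat \<Rightarrow> real) \<Rightarrow> (nat \<Rightarrow> nat \<Rightarrow> real poly) \<Rightarrow> (nat \<Rightarrow> nat \<Rightarrow> real poly) \<Rightarrow> real poly \<Rightarrow> real \<Rightarrow> real" where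
"gform K1 K2 a b U V W r =
                (\<Sum>j=1..K1. (\<Sum>k=1..K2. poly (U j k) (r\<^sup>2) / ((a j)\<^sup>2 + (b k)\<^sup>2 - r\<^sup>2))
                              * (1 / sqrt ((a j)\<^sup>2 - r\<^sup>2)))
              + (\<Sum>k=1..K2. (\<Sum>j=1..K1. poly (V j k) (r\<^sup>2) / ((a j)\<^sup>2 + (b k)\<^sup>2 - r\<^sup>2))
                              * (1 / sqrt ((b k)\<^sup>2 - r\<^sup>2)))
              + poly W (r\<^sup>2)"

definition degok :: "nat \<Rightarrow> nat \<Rightarrow> nat \<Rightarrow> (nat \<Rightarrow> nat \<Rightarrow> real poly) \<Rightarrow> (nat \<Rightarrow> nat \<Rightarrow> real poly) \<Rightarrow> real poly \<Rightarrow> bool" where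
"degok n K1 K2 U V W \<longleftrightarrow> (\<forall>j\<in>{1..K1}. \<forall>k\<in>{1..K2}. degree (U j k) \<le> n div 2 + 1 \<and> degree (V j k) \<le> n div 2 + 1)
         \<and> (if n = 0 then W = 0 else degree W \<le> (n - 1) div 2)"

definition goodf :: "nat \<Rightarrow> nat \<Rightarrow> nat \<Rightarrow> (nat \<Rightarrow> real) \<Rightarrow> (nat \<Rightarrow> real) \<Rightarrow> real \<Rightarrow> (real \<Rightarrow> real) \<Rightarrow> bool" where
"goodf n K1 K2 a b \<rho> f \<longleftrightarrow> (\<exists>U V W. degok n K1 K2 U V W \<and> (\<forall>r. 0 < r \<and> r < \<rho> \<longrightarrow> f r = gform K1 K2 a b U V W r))"

lemma goodf_cong:
  assumes "goodf n K1 K2 a b \<rho> f" "\<And>r. 0 < r \<Longrightarrow> r < \<rho> \<Longrightarrow> g r = f r"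
  shows "goodf n K1 K2 a b \<rho> g"
  using assms unfolding goodf_def by auto

lemma goodf_zero: "goodf n K1 K2 a b \<rho> (\<lambda>r. 0)"
  unfolding goodf_def degok_def gform_def
  by (rule exI[of _ "\<lambda>j k. 0"], rule exI[of _ "\<lambda>j k. 0"], rule exI[of _ 0]) simp

lemma goodf_add:
  assumes "goodf n K1 K2 a b \<rho> f" "goodf n K1 K2 a b \<rho> g"
  shows "goodf n K1 K2 a b \<rho> (\<lambda>r. f r + g r)"
proof -
  obtain U1 V1 W1 where 1: "degok n K1 K2 U1 V1 W1" "\<And>r. 0 < r \<and> r < \<rho> \<Longrightarrow> f r = gform K1 K2 a b U1 V1 W1 r"
    using assms(1) unfolding goodf_def by blast
  obtain U2 V2 W2 where 2: "degok n K1 K2 U2 V2 W2" "\<And>r. 0 < r \<and> r < \<rho> \<Longrightarrow> g r = gform K1 K2 a b U2 V2 W2 r"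
    using assms(2) unfolding goodf_def by blast
  have d: "degok n K1 K2 (\<lambda>j k. U1 j k + U2 j k) (\<lambda>j k. V1 j k + V2 j k) (W1 + W2)"
    using 1(1) 2(1) unfolding degok_def
    by (cases "n = 0") (simp_all add: degree_add_le)
  have e: "gform K1 K2 a b U1 V1 W1 r + gform K1 K2 a b U2 V2 W2 r
      = gform K1 K2 a b (\<lambda>j k. U1 j k + U2 j k) (\<lambda>j k. V1 j k + V2 j k) (W1 + W2) r" for r
    unfolding gform_def by (simp add: sum.distrib add_divide_distrib distrib_right add_ac)
  show ?thesis unfolding goodf_def using d 1(2) 2(2) e by auto
qed

lemma goodf_cmult:
  assumes "goodf n K1 K2 a b \<rho> f"
  shows "goodf n K1 K2 a b \<rho> (\<lambda>r. c * f r)"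
proof -
  obtain U1 V1 W1 where 1: "degok n K1 K2 U1 V1 W1" "\<And>r. 0 < r \<and> r < \<rho> \<Longrightarrow> f r = gform K1 K2 a b U1 V1 W1 r"
    using assms(1) unfolding goodf_def by blast
  have d: "degok n K1 K2 (\<lambda>j k. smult c (U1 j k)) (\<lambda>j k. smult c (V1 j k)) (smult c W1)"
    using 1(1) unfolding degok_def
    by (cases "n = 0") (auto intro: order_trans[OF degree_smult_le])
  have e: "c * gform K1 K2 a b U1 V1 W1 r
      = gform K1 K2 a b (\<lambda>j k. smult c (U1 j k)) (\<lambda>j k. smult c (V1 j k)) (smult c W1) r" for r
    unfolding gform_def poly_smult distrib_left sum_distrib_left mult.assoc[symmetric] times_divide_eq_right
    by simp
  show ?thesis unfolding goodf_def using d 1(2) e by auto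
qed

lemma goodf_sum:
  assumes "finite S" "\<And>i. i \<in> S \<Longrightarrow> goodf n K1 K2 a b \<rho> (F i)"
  shows "goodf n K1 K2 a b \<rho> (\<lambda>r. \<Sum>i\<in>S. F i r)"
  using assms
proof (induction S rule: finite_induct)
  case empty
  then show ?case using goodf_zero by simp
next
  case (insert x S)
  then show ?case using goodf_add[of n K1 K2 a b \<rho> "F x" "\<lambda>r. \<Sum>i\<in>S. F i r"] by simp
qed

lemma goodf_W:
  assumes "W = 0 \<or> 2 * degree W + 1 \<le> n"
    and "\<And>r. 0 < r \<Longrightarrow> r < \<rho> \<Longrightarrow> f r = poly W (r\<^sup>2)"
  shows "goodf n K1 K2 a b \<rho> f"
  unfolding goodf_def
proof (intro exI conjI allI impI)
  show "degok n K1 K2 (\<lambda>j k. 0) (\<lambda>j k. 0) W"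
    using assms(1) unfolding degok_def by auto
  fix r assume "0 < r \<and> r < \<rho>"
  then show "f r = gform K1 K2 a b (\<lambda>j k. 0) (\<lambda>j k. 0) W r"
    using assms(2) unfolding gform_def by simp
qed

lemma sum_poly_delta:
  fixes p :: "real poly" and g :: "nat \<Rightarrow> real"
  assumes "k0 \<in> S" "finite S"
  shows "(\<Sum>k\<in>S. poly (if k = k0 then p else 0) x / g k) = poly p x / g k0"
proof -
  have "(\<Sum>k\<in>S. poly (if k = k0 then p else 0) x / g k) = (\<Sum>k\<in>S. if k = k0 then poly p x / g k else 0)"
    by (rule sum.cong) auto
  then show ?thesis using assms by simp
qed

lemma goodf_U:
  assumes "j0 \<in> {1..K1}" "k0 \<in> {1..K2}" "degree p \<le> n div 2 + 1"
    and "\<And>r. 0 < r \<Longrightarrow> r < \<rho> \<Longrightarrow> f r = poly p (r\<^sup>2) / ((a j0)\<^sup>2 + (b k0)\<^sup>2 - r\<^sup>2) * (1 / sqrt ((a j0)\<^sup>2 - r\<^sup>2))"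
  shows "goodf n K1 K2 a b \<rho> f"
  unfolding goodf_def
proof (intro exI conjI allI impI)
  let ?U = "\<lambda>j k. if j = j0 then (if k = k0 then p else 0) else (0::real poly)"
  show "degok n K1 K2 ?U (\<lambda>j k. 0) 0"
    using assms(3) unfolding degok_def by auto
  fix r assume r: "0 < r \<and> r < \<rho>"
  have "(\<Sum>j = 1..K1. (\<Sum>k = 1..K2. poly (?U j k) (r\<^sup>2) / ((a j)\<^sup>2 + (b k)\<^sup>2 - r\<^sup>2)) * (1 / sqrt ((a j)\<^sup>2 - r\<^sup>2)))
      = (\<Sum>j = 1..K1. if j = j0 then poly p (r\<^sup>2) / ((a j0)\<^sup>2 + (b k0)\<^sup>2 - r\<^sup>2) * (1 / sqrt ((a j0)\<^sup>2 - r\<^sup>2)) else 0)"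
    by (rule sum.cong) (use assms(2) in \<open>auto simp: sum_poly_delta\<close>)
  also have "\<dots> = f r" using assms(1,4) r by simp
  finally show "f r = gform K1 K2 a b ?U (\<lambda>j k. 0) 0 r" unfolding gform_def by simp
qed

lemma goodf_V:
  assumes "j0 \<in> {1..K1}" "k0 \<in> {1..K2}" "degree p \<le> n div 2 + 1"
    and "\<And>r. 0 < r \<Longrightarrow> r < \<rho> \<Longrightarrow> f r = poly p (r\<^sup>2) / ((a j0)\<^sup>2 + (b k0)\<^sup>2 - r\<^sup>2) * (1 / sqrt ((b k0)\<^sup>2 - r\<^sup>2))"
  shows "goodf n K1 K2 a b \<rho> f"
  unfolding goodf_def
proof (intro exI conjI allI impI)
  let ?V = "\<lambda>j k. if k = k0 then (if j = j0 then p else 0) else (0::real poly)"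
  show "degok n K1 K2 (\<lambda>j k. 0) ?V 0"
    using assms(3) unfolding degok_def by auto
  fix r assume r: "0 < r \<and> r < \<rho>"
  have "(\<Sum>k = 1..K2. (\<Sum>j = 1..K1. poly (?V j k) (r\<^sup>2) / ((a j)\<^sup>2 + (b k)\<^sup>2 - r\<^sup>2)) * (1 / sqrt ((b k)\<^sup>2 - r\<^sup>2)))
      = (\<Sum>k = 1..K2. if k = k0 then poly p (r\<^sup>2) / ((a j0)\<^sup>2 + (b k0)\<^sup>2 - r\<^sup>2) * (1 / sqrt ((b k0)\<^sup>2 - r\<^sup>2)) else 0)"
    by (rule sum.cong) (use assms(1) in \<open>auto simp: sum_poly_delta\<close>)
  also have "\<dots> = f r" using assms(2,4) r by simp
  finally show "f r = gform K1 K2 a b (\<lambda>j k. 0) ?V 0 r" unfolding gform_def by simp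
qed

lemma mom_integrable: "(\<lambda>t. (r * cos t)^m * (r * sin t)^h) integrable_on {0..2*pi}"
  by (intro integrable_continuous_real continuous_intros)

lemma mom_eval: "integral {0..2*pi} (\<lambda>t. (r * cos t)^m * (r * sin t)^h)
   = r^(m+h) * integral {0..2*pi} (\<lambda>t. cos t ^ m * sin t ^ h)"
proof -
  have "(\<lambda>t. (r * cos t)^m * (r * sin t)^h) = (\<lambda>t. r^(m+h) * (cos t ^ m * sin t ^ h))"
    by (simp add: power_mult_distrib power_add fun_eq_iff algebra_simps)
  then show ?thesis by simp
qed

lemma Y_pointwise:
  fixes r d t :: real
  assumes "r * sin t \<noteq> d"
  shows "(r * cos t)^(2*e) / (r * sin t - d) = (r\<^sup>2 - d\<^sup>2)^e * (1 / (r * sin t - d))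
     - (\<Sum>i<e. (r\<^sup>2 - d\<^sup>2)^(e-1-i) * ((r * cos t)^(2*i) * (r * sin t)^1 + d * ((r * cos t)^(2*i) * (r * sin t)^0)))"
proof -
  define x where "x = r * cos t"
  define y where "y = r * sin t"
  define B where "B = r\<^sup>2 - d\<^sup>2"
  have yd: "y - d \<noteq> 0" using assms unfolding y_def by simp
  have x2: "x^2 = r^2 - y^2"
  proof -
    have h: "r\<^sup>2 * (cos t)\<^sup>2 + r\<^sup>2 * (sin t)\<^sup>2 = r^2"
      using sin_cos_squared_add[of t] by (metis add.commute distrib_left mult.right_neutral)
    then show ?thesis unfolding x_def y_def by (simp add: power_mult_distrib algebra_simps)
  qed
  define S where "S = (\<Sum>i<e. B^(e - Suc i) * (x^2)^i)"
  have "(x^2)^e - B^e = (x^2 - B) * S" unfolding S_def by (rule power_diff_sumr2)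
  then have q: "(x^2)^e = (x^2 - B) * S + B^e" by (simp only: eq_diff_eq)
  have e1: "x^(2*e) = B^e + (x^2 - B) * S" unfolding power_mult q by (simp only: add.commute)
  have e2: "x^2 - B = - ((y - d) * (y + d))" unfolding x2 B_def by (simp add: algebra_simps power2_eq_square)
  have xe: "x^(2*e) = B^e - (y - d) * ((y + d) * S)" using e1 e2 by (simp add: algebra_simps)
  have "x^(2*e) / (y - d) = B^e * (1 / (y - d)) - (y + d) * S"
    unfolding xe using yd by (simp add: field_simps)
  also have "(y + d) * S = (\<Sum>i<e. B^(e-1-i) * (x^(2*i) * y^1 + d * (x^(2*i) * y^0)))"
    unfolding S_def sum_distrib_left
    by (rule sum.cong) (simp_all add: power_mult algebra_simps power2_eq_square power_mult_distrib)
  finally show ?thesis unfolding x_def y_def B_def .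
qed

lemma X_pointwise:
  fixes r c t :: real
  assumes "r * cos t \<noteq> c"
  shows "(r * sin t)^(2*e) / (r * cos t - c) = (r\<^sup>2 - c\<^sup>2)^e * (1 / (r * cos t - c))
     - (\<Sum>i<e. (r\<^sup>2 - c\<^sup>2)^(e-1-i) * ((r * cos t)^1 * (r * sin t)^(2*i) + c * ((r * cos t)^0 * (r * sin t)^(2*i))))"
proof -
  define x where "x = r * sin t"
  define y where "y = r * cos t"
  define B where "B = r\<^sup>2 - c\<^sup>2"
  have yd: "y - c \<noteq> 0" using assms unfolding y_def by simp
  have x2: "x^2 = r^2 - y^2"
  proof -
    have h: "r\<^sup>2 * (cos t)\<^sup>2 + r\<^sup>2 * (sin t)\<^sup>2 = r^2"
      using sin_cos_squared_add[of t] by (metis add.commute distrib_left mult.right_neutral)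
    then show ?thesis unfolding x_def y_def by (simp add: power_mult_distrib algebra_simps)
  qed
  define S where "S = (\<Sum>i<e. B^(e - Suc i) * (x^2)^i)"
  have "(x^2)^e - B^e = (x^2 - B) * S" unfolding S_def by (rule power_diff_sumr2)
  then have q: "(x^2)^e = (x^2 - B) * S + B^e" by (simp only: eq_diff_eq)
  have e1: "x^(2*e) = B^e + (x^2 - B) * S" unfolding power_mult q by (simp only: add.commute)
  have e2: "x^2 - B = - ((y - c) * (y + c))" unfolding x2 B_def by (simp add: algebra_simps power2_eq_square)
  have xe: "x^(2*e) = B^e - (y - c) * ((y + c) * S)" using e1 e2 by (simp add: algebra_simps)
  have "x^(2*e) / (y - c) = B^e * (1 / (y - c)) - (y + c) * S"
    unfolding xe using yd by (simp add: field_simps)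
  also have "(y + c) * S = (\<Sum>i<e. B^(e-1-i) * (y^1 * x^(2*i) + c * (y^0 * x^(2*i))))"
    unfolding S_def sum_distrib_left
    by (rule sum.cong) (simp_all add: power_mult algebra_simps power2_eq_square power_mult_distrib)
  finally show ?thesis unfolding x_def y_def B_def .
qed

lemma sum_term_integral:
  "integral {0..2*pi} (\<lambda>t. \<Sum>i<e. (B::real)^(e-1-i) * ((r * cos t)^(2*i) * (r * sin t)^1 + d * ((r * cos t)^(2*i) * (r * sin t)^0)))
   = (\<Sum>i<e. B^(e-1-i) * (d * (r^(2*i) * integral {0..2*pi} (\<lambda>t. cos t ^ (2*i) * sin t ^ 0))))"
proof -
  have "integral {0..2*pi} (\<lambda>t. \<Sum>i<e. B^(e-1-i) * ((r * cos t)^(2*i) * (r * sin t)^1 + d * ((r * cos t)^(2*i) * (r * sin t)^0)))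
     = (\<Sum>i<e. integral {0..2*pi} (\<lambda>t. B^(e-1-i) * ((r * cos t)^(2*i) * (r * sin t)^1 + d * ((r * cos t)^(2*i) * (r * sin t)^0))))"
    by (rule integral_sum) (auto intro!: integrable_continuous_real continuous_intros)
  also have "\<dots> = (\<Sum>i<e. B^(e-1-i) * (d * (r^(2*i) * integral {0..2*pi} (\<lambda>t. cos t ^ (2*i) * sin t ^ 0))))"
  proof (rule sum.cong[OF refl])
    fix i
    have "integral {0..2*pi} (\<lambda>t. (r * cos t)^(2*i) * (r * sin t)^1 + d * ((r * cos t)^(2*i) * (r * sin t)^0))
      = integral {0..2*pi} (\<lambda>t. (r * cos t)^(2*i) * (r * sin t)^1) + integral {0..2*pi} (\<lambda>t. d * ((r * cos t)^(2*i) * (r * sin t)^0))"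
      by (rule integral_add) (auto intro!: integrable_continuous_real continuous_intros)
    also have "\<dots> = d * (r^(2*i) * integral {0..2*pi} (\<lambda>t. cos t ^ (2*i) * sin t ^ 0))"
      using mom_zero[of "2*i" 1 r] mom_eval[of r "2*i" 0] by simp
    finally show "integral {0..2*pi} (\<lambda>t. B^(e-1-i) * ((r * cos t)^(2*i) * (r * sin t)^1 + d * ((r * cos t)^(2*i) * (r * sin t)^0)))
       = B^(e-1-i) * (d * (r^(2*i) * integral {0..2*pi} (\<lambda>t. cos t ^ (2*i) * sin t ^ 0)))" by simp
  qed
  finally show ?thesis .
qed

lemma sum_term_integral':
  "integral {0..2*pi} (\<lambda>t. \<Sum>i<e. (B::real)^(e-1-i) * ((r * cos t)^1 * (r * sin t)^(2*i) + c * ((r * cos t)^0 * (r * sin t)^(2*i))))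
   = (\<Sum>i<e. B^(e-1-i) * (c * (r^(2*i) * integral {0..2*pi} (\<lambda>t. cos t ^ 0 * sin t ^ (2*i)))))"
proof -
  have "integral {0..2*pi} (\<lambda>t. \<Sum>i<e. B^(e-1-i) * ((r * cos t)^1 * (r * sin t)^(2*i) + c * ((r * cos t)^0 * (r * sin t)^(2*i))))
     = (\<Sum>i<e. integral {0..2*pi} (\<lambda>t. B^(e-1-i) * ((r * cos t)^1 * (r * sin t)^(2*i) + c * ((r * cos t)^0 * (r * sin t)^(2*i)))))"
    by (rule integral_sum) (auto intro!: integrable_continuous_real continuous_intros)
  also have "\<dots> = (\<Sum>i<e. B^(e-1-i) * (c * (r^(2*i) * integral {0..2*pi} (\<lambda>t. cos t ^ 0 * sin t ^ (2*i)))))"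
  proof (rule sum.cong[OF refl])
    fix i
    have "integral {0..2*pi} (\<lambda>t. (r * cos t)^1 * (r * sin t)^(2*i) + c * ((r * cos t)^0 * (r * sin t)^(2*i)))
      = integral {0..2*pi} (\<lambda>t. (r * cos t)^1 * (r * sin t)^(2*i)) + integral {0..2*pi} (\<lambda>t. c * ((r * cos t)^0 * (r * sin t)^(2*i)))"
      by (rule integral_add) (auto intro!: integrable_continuous_real continuous_intros)
    also have "\<dots> = c * (r^(2*i) * integral {0..2*pi} (\<lambda>t. cos t ^ 0 * sin t ^ (2*i)))"
      using mom_zero[of 1 "2*i" r] mom_eval[of r 0 "2*i"] by simp
    finally show "integral {0..2*pi} (\<lambda>t. B^(e-1-i) * ((r * cos t)^1 * (r * sin t)^(2*i) + c * ((r * cos t)^0 * (r * sin t)^(2*i))))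
       = B^(e-1-i) * (c * (r^(2*i) * integral {0..2*pi} (\<lambda>t. cos t ^ 0 * sin t ^ (2*i))))" by simp
  qed
  finally show ?thesis .
qed

lemma Y_eval:
  fixes r d :: real
  assumes "0 \<le> r" "r < \<bar>d\<bar>"
  shows "integral {0..2*pi} (\<lambda>t. (r * cos t)^(2*e) / (r * sin t - d))
    = (r\<^sup>2 - d\<^sup>2)^e * (jc d / sqrt (d\<^sup>2 - r\<^sup>2))
      - (\<Sum>i<e. (r\<^sup>2 - d\<^sup>2)^(e-1-i) * (d * (r^(2*i) * integral {0..2*pi} (\<lambda>t. cos t ^ (2*i) * sin t ^ 0))))"
proof -
  have K: "((\<lambda>t. 1 / (r * sin t - d)) has_integral jc d / sqrt (d\<^sup>2 - r\<^sup>2)) {0..2*pi}"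
    by (rule K_int) (use assms in auto)
  have fe: "(\<lambda>t. (r * cos t)^(2*e) / (r * sin t - d)) = (\<lambda>t. (r\<^sup>2 - d\<^sup>2)^e * (1 / (r * sin t - d))
     - (\<Sum>i<e. (r\<^sup>2 - d\<^sup>2)^(e-1-i) * ((r * cos t)^(2*i) * (r * sin t)^1 + d * ((r * cos t)^(2*i) * (r * sin t)^0))))"
    by (rule ext, rule Y_pointwise) (use nz_sin' assms in auto)
  have "integral {0..2*pi} (\<lambda>t. (r\<^sup>2 - d\<^sup>2)^e * (1 / (r * sin t - d))
     - (\<Sum>i<e. (r\<^sup>2 - d\<^sup>2)^(e-1-i) * ((r * cos t)^(2*i) * (r * sin t)^1 + d * ((r * cos t)^(2*i) * (r * sin t)^0))))
     = integral {0..2*pi} (\<lambda>t. (r\<^sup>2 - d\<^sup>2)^e * (1 / (r * sin t - d)))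
       - integral {0..2*pi} (\<lambda>t. \<Sum>i<e. (r\<^sup>2 - d\<^sup>2)^(e-1-i) * ((r * cos t)^(2*i) * (r * sin t)^1 + d * ((r * cos t)^(2*i) * (r * sin t)^0)))"
    by (rule integral_diff) (use K nz_sin'[OF assms] in \<open>auto intro!: integrable_continuous_real continuous_intros integrable_on_cmult_left simp: has_integral_integrable\<close>)
  moreover have "integral {0..2*pi} (\<lambda>t. (r\<^sup>2 - d\<^sup>2)^e * (1 / (r * sin t - d))) = (r\<^sup>2 - d\<^sup>2)^e * (jc d / sqrt (d\<^sup>2 - r\<^sup>2))"
    by (simp only: integral_mult_right integral_unique[OF K])
  ultimately show ?thesis unfolding fe sum_term_integral by (simp only:)
qed

lemma X_eval:
  fixes r c :: real
  assumes "0 \<le> r" "r < \<bar>c\<bar>"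
  shows "integral {0..2*pi} (\<lambda>t. (r * sin t)^(2*e) / (r * cos t - c))
    = (r\<^sup>2 - c\<^sup>2)^e * (jc c / sqrt (c\<^sup>2 - r\<^sup>2))
      - (\<Sum>i<e. (r\<^sup>2 - c\<^sup>2)^(e-1-i) * (c * (r^(2*i) * integral {0..2*pi} (\<lambda>t. cos t ^ 0 * sin t ^ (2*i)))))"
proof -
  have K: "((\<lambda>t. 1 / (r * cos t - c)) has_integral jc c / sqrt (c\<^sup>2 - r\<^sup>2)) {0..2*pi}"
    by (rule J_int) (use assms in auto)
  have fe: "(\<lambda>t. (r * sin t)^(2*e) / (r * cos t - c)) = (\<lambda>t. (r\<^sup>2 - c\<^sup>2)^e * (1 / (r * cos t - c))
     - (\<Sum>i<e. (r\<^sup>2 - c\<^sup>2)^(e-1-i) * ((r * cos t)^1 * (r * sin t)^(2*i) + c * ((r * cos t)^0 * (r * sin t)^(2*i)))))"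
    by (rule ext, rule X_pointwise) (use nz_cos' assms in auto)
  have "integral {0..2*pi} (\<lambda>t. (r\<^sup>2 - c\<^sup>2)^e * (1 / (r * cos t - c))
     - (\<Sum>i<e. (r\<^sup>2 - c\<^sup>2)^(e-1-i) * ((r * cos t)^1 * (r * sin t)^(2*i) + c * ((r * cos t)^0 * (r * sin t)^(2*i)))))
     = integral {0..2*pi} (\<lambda>t. (r\<^sup>2 - c\<^sup>2)^e * (1 / (r * cos t - c)))
       - integral {0..2*pi} (\<lambda>t. \<Sum>i<e. (r\<^sup>2 - c\<^sup>2)^(e-1-i) * ((r * cos t)^1 * (r * sin t)^(2*i) + c * ((r * cos t)^0 * (r * sin t)^(2*i))))"
    by (rule integral_diff) (use K nz_cos'[OF assms] in \<open>auto intro!: integrable_continuous_real continuous_intros integrable_on_cmult_left simp: has_integral_integrable\<close>)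
  moreover have "integral {0..2*pi} (\<lambda>t. (r\<^sup>2 - c\<^sup>2)^e * (1 / (r * cos t - c))) = (r\<^sup>2 - c\<^sup>2)^e * (jc c / sqrt (c\<^sup>2 - r\<^sup>2))"
    by (simp only: integral_mult_right integral_unique[OF K])
  ultimately show ?thesis unfolding fe sum_term_integral' by (simp only:)
qed

lemma Z_pointwise:
  fixes x y c d D r :: real
  assumes xy: "x^2 + y^2 = r^2" and nz: "x - c \<noteq> 0" "y - d \<noteq> 0" and D: "D = c^2 + d^2 - r^2" "D \<noteq> 0"
  shows "1 / ((x - c) * (y - d)) = - (1 / D) * (x^1 / (y - d) + c * (1 / (y - d)) + y^1 / (x - c) + d * (1 / (x - c)))"
proof -
  have "x^1 / (y - d) + c * (1 / (y - d)) + y^1 / (x - c) + d * (1 / (x - c))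
      = ((x + c) * (x - c) + (y + d) * (y - d)) / ((x - c) * (y - d))"
  proof -
    have gen: "\<And>u v. u \<noteq> 0 \<Longrightarrow> v \<noteq> 0 \<Longrightarrow> x^1 / v + c * (1 / v) + y^1 / u + d * (1 / u) = ((x + c) * u + (y + d) * v) / (u * v)"
      by (simp add: field_simps)
    show ?thesis using gen[OF nz] by (simp add: mult.commute)
  qed
  also have "(x + c) * (x - c) + (y + d) * (y - d) = - D"
    using xy D(1) by (simp add: algebra_simps power2_eq_square)
  finally have e: "x^1 / (y - d) + c * (1 / (y - d)) + y^1 / (x - c) + d * (1 / (x - c)) = - D / ((x - c) * (y - d))" .
  show ?thesis unfolding e using D(2) nz by (simp add: field_simps)
qed

lemma Z_eval:
  fixes r c d :: real
  assumes r: "0 \<le> r" "r < \<bar>c\<bar>" "r < \<bar>d\<bar>"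
  shows "integral {0..2*pi} (\<lambda>t. 1 / ((r * cos t - c) * (r * sin t - d)))
    = - (1 / (c^2 + d^2 - r^2)) * (c * (jc d / sqrt (d\<^sup>2 - r\<^sup>2)) + d * (jc c / sqrt (c\<^sup>2 - r\<^sup>2)))"
proof -
  have rd: "r^2 < d^2" using r by (metis abs_ge_zero abs_le_square_iff abs_of_nonneg le_less_trans less_eq_real_def not_le power2_abs)
  have Dpos: "c^2 + d^2 - r^2 > 0" using rd zero_le_power2[of c] by linarith
  have h1: "((\<lambda>t. (r * cos t)^1 / (r * sin t - d)) has_integral 0) {0..2*pi}"
  proof -
    have "(\<lambda>t. (r * cos t)^1 / (r * sin t - d)) integrable_on {0..2*pi}"
      by (intro integrable_continuous_real continuous_intros) (use nz_sin'[OF r(1,3)] in auto)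
    then show ?thesis using Y_odd[of 1 r d] r by (metis has_integral_integrable_integral odd_one)
  qed
  have h3: "((\<lambda>t. (r * sin t)^1 / (r * cos t - c)) has_integral 0) {0..2*pi}"
  proof -
    have "(\<lambda>t. (r * sin t)^1 / (r * cos t - c)) integrable_on {0..2*pi}"
      by (intro integrable_continuous_real continuous_intros) (use nz_cos'[OF r(1,2)] in auto)
    then show ?thesis using X_odd[of 1 r c] by (metis has_integral_integrable_integral odd_one)
  qed
  have h2: "((\<lambda>t. 1 / (r * sin t - d)) has_integral jc d / sqrt (d\<^sup>2 - r\<^sup>2)) {0..2*pi}"
    by (rule K_int) (use r in auto)
  have h4: "((\<lambda>t. 1 / (r * cos t - c)) has_integral jc c / sqrt (c\<^sup>2 - r\<^sup>2)) {0..2*pi}"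
    by (rule J_int) (use r in auto)
  have H: "((\<lambda>t. - (1 / (c^2 + d^2 - r^2)) * ((r * cos t)^1 / (r * sin t - d) + c * (1 / (r * sin t - d))
        + (r * sin t)^1 / (r * cos t - c) + d * (1 / (r * cos t - c))))
     has_integral (- (1 / (c^2 + d^2 - r^2)) * (0 + c * (jc d / sqrt (d\<^sup>2 - r\<^sup>2)) + 0 + d * (jc c / sqrt (c\<^sup>2 - r\<^sup>2))))) {0..2*pi}"
    by (intro has_integral_mult_right has_integral_add h1 h2 h3 h4)
  have fe: "(\<lambda>t. 1 / ((r * cos t - c) * (r * sin t - d))) = (\<lambda>t. - (1 / (c^2 + d^2 - r^2)) * ((r * cos t)^1 / (r * sin t - d) + c * (1 / (r * sin t - d))
        + (r * sin t)^1 / (r * cos t - c) + d * (1 / (r * cos t - c))))"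
  proof (rule ext, rule Z_pointwise)
    fix t
    show "(r * cos t)\<^sup>2 + (r * sin t)\<^sup>2 = r\<^sup>2"
      using sin_cos_squared_add[of t] by (metis add.commute distrib_left mult.right_neutral power_mult_distrib)
    show "r * cos t - c \<noteq> 0" "r * sin t - d \<noteq> 0" using nz_cos[OF r(1,2)] nz_sin[OF r(1,3)] by auto
  qed (use Dpos in auto)
  show ?thesis unfolding fe using integral_unique[OF H] by simp
qed

definition igood :: "nat \<Rightarrow> nat \<Rightarrow> nat \<Rightarrow> (nat \<Rightarrow> real) \<Rightarrow> (nat \<Rightarrow> real) \<Rightarrow> real \<Rightarrow> (real \<Rightarrow> real \<Rightarrow> real) \<Rightarrow> bool" where
"igood n K1 K2 a b \<rho> g \<longleftrightarrow> goodf n K1 K2 a b \<rho> (\<lambda>r. integral {0..2*pi} (g r))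
    \<and> (\<forall>r. 0 < r \<and> r < \<rho> \<longrightarrow> g r integrable_on {0..2*pi})"

lemma igood_add:
  assumes "igood n K1 K2 a b \<rho> f" "igood n K1 K2 a b \<rho> g"
  shows "igood n K1 K2 a b \<rho> (\<lambda>r t. f r t + g r t)"
  unfolding igood_def
proof
  show "goodf n K1 K2 a b \<rho> (\<lambda>r. integral {0..2 * pi} (\<lambda>t. f r t + g r t))"
    using goodf_add[of n K1 K2 a b \<rho> "\<lambda>r. integral {0..2*pi} (f r)" "\<lambda>r. integral {0..2*pi} (g r)"] assms
    unfolding igood_def by (auto intro: goodf_cong simp: integral_add)
  show "\<forall>r. 0 < r \<and> r < \<rho> \<longrightarrow> (\<lambda>t. f r t + g r t) integrable_on {0..2 * pi}"
    using assms unfolding igood_def by (auto intro: integrable_add)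
qed

lemma igood_cmult:
  assumes "igood n K1 K2 a b \<rho> f"
  shows "igood n K1 K2 a b \<rho> (\<lambda>r t. c * f r t)"
  unfolding igood_def
proof
  show "goodf n K1 K2 a b \<rho> (\<lambda>r. integral {0..2 * pi} (\<lambda>t. c * f r t))"
    using goodf_cmult[of n K1 K2 a b \<rho> "\<lambda>r. integral {0..2*pi} (f r)" c] assms
    unfolding igood_def by simp
  show "\<forall>r. 0 < r \<and> r < \<rho> \<longrightarrow> (\<lambda>t. c * f r t) integrable_on {0..2 * pi}"
    using assms unfolding igood_def by (auto intro: integrable_on_mult_right)
qed

lemma igood_zero: "igood n K1 K2 a b \<rho> (\<lambda>r t. 0)"
  unfolding igood_def using goodf_zero by (simp add: integrable_0)

lemma igood_sum:
  assumes "finite S" "\<And>i. i \<in> S \<Longrightarrow> igood n K1 K2 a b \<rho> (F i)"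
  shows "igood n K1 K2 a b \<rho> (\<lambda>r t. \<Sum>i\<in>S. F i r t)"
  using assms
proof (induction S rule: finite_induct)
  case empty
  then show ?case using igood_zero by simp
next
  case (insert x S)
  then show ?case using igood_add[of n K1 K2 a b \<rho> "F x" "\<lambda>r t. \<Sum>i\<in>S. F i r t"] by simp
qed

lemma igood_cong:
  assumes "igood n K1 K2 a b \<rho> f" "\<And>r t. 0 < r \<Longrightarrow> r < \<rho> \<Longrightarrow> g r t = f r t"
  shows "igood n K1 K2 a b \<rho> g"
proof -
  have e: "g r = f r" if "0 < r" "r < \<rho>" for r using assms(2) that by auto
  show ?thesis using assms(1) unfolding igood_def
    by (auto intro: goodf_cong simp: e)
qed

lemma degree_lin: "degree [:u, v:] \<le> 1"
  by (simp add: degree_pCons_le)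

lemma degree_linpow: "degree ([:u, v:] ^ e) \<le> e"
proof -
  have "degree ([:u, v:] ^ e) \<le> degree [:u, v:] * e" by (rule degree_power_le)
  also have "\<dots> \<le> 1 * e" by (rule mult_le_mono1[OF degree_lin])
  finally show ?thesis by simp
qed

lemma goodf_Wterm:
  assumes "i < e" "2 * e \<le> n"
    and "\<And>r. 0 < r \<Longrightarrow> r < \<rho> \<Longrightarrow> f r = (r\<^sup>2 - d\<^sup>2)^(e-1-i) * (K * r^(2*i))"
  shows "goodf n K1 K2 a b \<rho> f"
proof (rule goodf_W)
  let ?W = "[:- (d\<^sup>2), 1:] ^ (e-1-i) * monom K i"
  have "degree ?W \<le> (e - 1 - i) + i"
    using degree_mult_le[of "[:- (d\<^sup>2), 1:] ^ (e-1-i)" "monom K i"] degree_linpow[of "- (d\<^sup>2)" 1 "e-1-i"]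
      degree_monom_le[of K i] by linarith
  then show "?W = 0 \<or> 2 * degree ?W + 1 \<le> n" using assms(1,2) by auto
  fix r assume "0 < r" "r < \<rho>"
  then have fr: "f r = (r\<^sup>2 - d\<^sup>2)^(e-1-i) * (K * (r\<^sup>2)^i)" using assms(3) by (simp add: power_mult)
  show "f r = poly ?W (r\<^sup>2)" unfolding fr by (simp add: poly_monom algebra_simps)
qed

lemma sq_less: "0 \<le> r \<Longrightarrow> r < \<bar>d\<bar> \<Longrightarrow> r\<^sup>2 < (d::real)\<^sup>2"
proof -
  assume "0 \<le> r" "r < \<bar>d\<bar>"
  then have "\<bar>r\<bar>^2 < \<bar>d\<bar>^2" by (intro power_strict_mono) auto
  then show ?thesis by simp
qed

lemma ig_mom:
  assumes "m + h + 1 \<le> n"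
  shows "igood n K1 K2 a b \<rho> (\<lambda>r t. (r * cos t)^m * (r * sin t)^h)"
  unfolding igood_def
proof (intro conjI allI impI)
  fix r show "(\<lambda>t. (r * cos t)^m * (r * sin t)^h) integrable_on {0..2*pi}" by (rule mom_integrable)
next
  show "goodf n K1 K2 a b \<rho> (\<lambda>r. integral {0..2 * pi} (\<lambda>t. (r * cos t) ^ m * (r * sin t) ^ h))"
  proof (cases "odd (m + h)")
    case True
    show ?thesis by (rule goodf_cong[OF goodf_zero]) (use mom_zero[OF True] in auto)
  next
    case False
    then obtain q where q: "m + h = 2 * q" by (metis evenE)
    define \<mu> where "\<mu> = integral {0..2*pi} (\<lambda>t. cos t ^ m * sin t ^ h)"
    show ?thesis
    proof (rule goodf_W[where W = "monom \<mu> q"])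
      show "monom \<mu> q = 0 \<or> 2 * degree (monom \<mu> q) + 1 \<le> n"
        using degree_monom_le[of \<mu> q] q assms by auto
      fix r :: real
      show "integral {0..2 * pi} (\<lambda>t. (r * cos t) ^ m * (r * sin t) ^ h) = poly (monom \<mu> q) (r\<^sup>2)"
        unfolding mom_eval \<mu>_def[symmetric] q by (simp add: poly_monom power_mult mult.commute)
          (metis power_mult mult.commute)
    qed
  qed
qed

context
  fixes n K1 K2 :: nat and a b :: "nat \<Rightarrow> real" and \<rho> :: real and j k :: nat
  assumes jk: "j \<in> {1..K1}" "k \<in> {1..K2}" and ra: "\<rho> \<le> \<bar>a j\<bar>" and rb: "\<rho> \<le> \<bar>b k\<bar>"
begin

lemma ig_Y:
  assumes "m \<le> n"
  shows "igood n K1 K2 a b \<rho> (\<lambda>r t. (r * cos t)^m / (r * sin t - b k))"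
  unfolding igood_def
proof (intro conjI allI impI)
  fix r :: real assume r: "0 < r \<and> r < \<rho>"
  show "(\<lambda>t. (r * cos t)^m / (r * sin t - b k)) integrable_on {0..2*pi}"
    by (intro integrable_continuous_real continuous_intros) (use nz_sin'[of r "b k"] r rb in auto)
next
  show "goodf n K1 K2 a b \<rho> (\<lambda>r. integral {0..2 * pi} (\<lambda>t. (r * cos t)^m / (r * sin t - b k)))"
  proof (cases "odd m")
    case True
    show ?thesis by (rule goodf_cong[OF goodf_zero]) (use Y_odd[OF True] rb in auto)
  next
    case False
    then obtain e where e: "m = 2 * e" by (metis evenE)
    let ?d = "b k"
    define \<mu> where "\<mu> i = integral {0..2*pi} (\<lambda>t. cos t ^ (2*i) * sin t ^ 0)" for i
    let ?p = "smult (jc ?d) ([:- (?d\<^sup>2), 1:] ^ e * [:(a j)\<^sup>2 + ?d\<^sup>2, -1:])"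
    have gV: "goodf n K1 K2 a b \<rho> (\<lambda>r. (r\<^sup>2 - ?d\<^sup>2)^e * (jc ?d / sqrt (?d\<^sup>2 - r\<^sup>2)))"
    proof (rule goodf_V[OF jk, where p = ?p])
      have "degree ?p \<le> e + 1"
        using degree_smult_le[of "jc ?d" "[:- (?d\<^sup>2), 1:] ^ e * [:(a j)\<^sup>2 + ?d\<^sup>2, -1:]"]
          degree_mult_le[of "[:- (?d\<^sup>2), 1:] ^ e" "[:(a j)\<^sup>2 + ?d\<^sup>2, -1:]"]
          degree_linpow[of "- (?d\<^sup>2)" 1 e] degree_lin[of "(a j)\<^sup>2 + ?d\<^sup>2" "-1"] by linarith
      then show "degree ?p \<le> n div 2 + 1" using e assms by linarith
      fix r :: real assume r: "0 < r" "r < \<rho>"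
      have "r\<^sup>2 < ?d\<^sup>2" using sq_less[of r ?d] r rb by auto
      then have D: "(a j)\<^sup>2 + ?d\<^sup>2 - r\<^sup>2 \<noteq> 0" using zero_le_power2[of "a j"] by linarith
      show "(r\<^sup>2 - ?d\<^sup>2)^e * (jc ?d / sqrt (?d\<^sup>2 - r\<^sup>2)) = poly ?p (r\<^sup>2) / ((a j)\<^sup>2 + ?d\<^sup>2 - r\<^sup>2) * (1 / sqrt (?d\<^sup>2 - r\<^sup>2))"
      proof -
        have pe: "poly ?p (r\<^sup>2) = (jc ?d * (r\<^sup>2 - ?d\<^sup>2)^e) * ((a j)\<^sup>2 + ?d\<^sup>2 - r\<^sup>2)"
          by (simp add: algebra_simps)
        show ?thesis unfolding pe using D by simp
      qed
    qed
    have gW: "goodf n K1 K2 a b \<rho> (\<lambda>r. \<Sum>i<e. (r\<^sup>2 - ?d\<^sup>2)^(e-1-i) * (?d * (r^(2*i) * \<mu> i)))"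
    proof (rule goodf_sum)
      fix i assume i: "i \<in> {..<e}"
      show "goodf n K1 K2 a b \<rho> (\<lambda>r. (r\<^sup>2 - ?d\<^sup>2)^(e-1-i) * (?d * (r^(2*i) * \<mu> i)))"
        by (rule goodf_Wterm[where K = "?d * \<mu> i" and i = i and e = e]) (use i e assms in \<open>auto simp: algebra_simps\<close>)
    qed simp
    have "goodf n K1 K2 a b \<rho> (\<lambda>r. (r\<^sup>2 - ?d\<^sup>2)^e * (jc ?d / sqrt (?d\<^sup>2 - r\<^sup>2)) + (-1) * (\<Sum>i<e. (r\<^sup>2 - ?d\<^sup>2)^(e-1-i) * (?d * (r^(2*i) * \<mu> i))))"
      by (rule goodf_add[OF gV goodf_cmult[OF gW]])
    then show ?thesis
    proof (rule goodf_cong)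
      fix r :: real assume r: "0 < r" "r < \<rho>"
      show "integral {0..2 * pi} (\<lambda>t. (r * cos t)^m / (r * sin t - b k)) =
          (r\<^sup>2 - ?d\<^sup>2)^e * (jc ?d / sqrt (?d\<^sup>2 - r\<^sup>2)) + (-1) * (\<Sum>i<e. (r\<^sup>2 - ?d\<^sup>2)^(e-1-i) * (?d * (r^(2*i) * \<mu> i)))"
      proof -
        have "integral {0..2*pi} (\<lambda>t. (r * cos t)^(2*e) / (r * sin t - ?d))
          = (r\<^sup>2 - ?d\<^sup>2)^e * (jc ?d / sqrt (?d\<^sup>2 - r\<^sup>2))
            - (\<Sum>i<e. (r\<^sup>2 - ?d\<^sup>2)^(e-1-i) * (?d * (r^(2*i) * integral {0..2*pi} (\<lambda>t. cos t ^ (2*i) * sin t ^ 0))))"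
          by (rule Y_eval) (use r rb in auto)
        then show ?thesis unfolding e \<mu>_def by simp
      qed
    qed
  qed
qed


lemma ig_X:
  assumes "m \<le> n"
  shows "igood n K1 K2 a b \<rho> (\<lambda>r t. (r * sin t)^m / (r * cos t - a j))"
  unfolding igood_def
proof (intro conjI allI impI)
  fix r :: real assume r: "0 < r \<and> r < \<rho>"
  show "(\<lambda>t. (r * sin t)^m / (r * cos t - a j)) integrable_on {0..2*pi}"
    by (intro integrable_continuous_real continuous_intros) (use nz_cos'[of r "a j"] r ra in auto)
next
  show "goodf n K1 K2 a b \<rho> (\<lambda>r. integral {0..2 * pi} (\<lambda>t. (r * sin t)^m / (r * cos t - a j)))"
  proof (cases "odd m")
    case True
    show ?thesis by (rule goodf_cong[OF goodf_zero]) (use X_odd[OF True] in auto)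
  next
    case False
    then obtain e where e: "m = 2 * e" by (metis evenE)
    let ?d = "a j"
    define \<mu> where "\<mu> i = integral {0..2*pi} (\<lambda>t. cos t ^ 0 * sin t ^ (2*i))" for i
    let ?p = "smult (jc ?d) ([:- (?d\<^sup>2), 1:] ^ e * [:?d\<^sup>2 + (b k)\<^sup>2, -1:])"
    have gV: "goodf n K1 K2 a b \<rho> (\<lambda>r. (r\<^sup>2 - ?d\<^sup>2)^e * (jc ?d / sqrt (?d\<^sup>2 - r\<^sup>2)))"
    proof (rule goodf_U[OF jk, where p = ?p])
      have "degree ?p \<le> e + 1"
        using degree_smult_le[of "jc ?d" "[:- (?d\<^sup>2), 1:] ^ e * [:?d\<^sup>2 + (b k)\<^sup>2, -1:]"]
          degree_mult_le[of "[:- (?d\<^sup>2), 1:] ^ e" "[:?d\<^sup>2 + (b k)\<^sup>2, -1:]"]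
          degree_linpow[of "- (?d\<^sup>2)" 1 e] degree_lin[of "?d\<^sup>2 + (b k)\<^sup>2" "-1"] by linarith
      then show "degree ?p \<le> n div 2 + 1" using e assms by linarith
      fix r :: real assume r: "0 < r" "r < \<rho>"
      have "r\<^sup>2 < ?d\<^sup>2" using sq_less[of r ?d] r ra by auto
      then have D: "?d\<^sup>2 + (b k)\<^sup>2 - r\<^sup>2 \<noteq> 0" using zero_le_power2[of "b k"] by linarith
      show "(r\<^sup>2 - ?d\<^sup>2)^e * (jc ?d / sqrt (?d\<^sup>2 - r\<^sup>2)) = poly ?p (r\<^sup>2) / (?d\<^sup>2 + (b k)\<^sup>2 - r\<^sup>2) * (1 / sqrt (?d\<^sup>2 - r\<^sup>2))"
      proof -
        have pe: "poly ?p (r\<^sup>2) = (jc ?d * (r\<^sup>2 - ?d\<^sup>2)^e) * (?d\<^sup>2 + (b k)\<^sup>2 - r\<^sup>2)"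
          by (simp add: algebra_simps)
        show ?thesis unfolding pe using D by simp
      qed
    qed
    have gW: "goodf n K1 K2 a b \<rho> (\<lambda>r. \<Sum>i<e. (r\<^sup>2 - ?d\<^sup>2)^(e-1-i) * (?d * (r^(2*i) * \<mu> i)))"
    proof (rule goodf_sum)
      fix i assume i: "i \<in> {..<e}"
      show "goodf n K1 K2 a b \<rho> (\<lambda>r. (r\<^sup>2 - ?d\<^sup>2)^(e-1-i) * (?d * (r^(2*i) * \<mu> i)))"
        by (rule goodf_Wterm[where K = "?d * \<mu> i" and i = i and e = e]) (use i e assms in \<open>auto simp: algebra_simps\<close>)
    qed simp
    have "goodf n K1 K2 a b \<rho> (\<lambda>r. (r\<^sup>2 - ?d\<^sup>2)^e * (jc ?d / sqrt (?d\<^sup>2 - r\<^sup>2)) + (-1) * (\<Sum>i<e. (r\<^sup>2 - ?d\<^sup>2)^(e-1-i) * (?d * (r^(2*i) * \<mu> i))))"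
      by (rule goodf_add[OF gV goodf_cmult[OF gW]])
    then show ?thesis
    proof (rule goodf_cong)
      fix r :: real assume r: "0 < r" "r < \<rho>"
      show "integral {0..2 * pi} (\<lambda>t. (r * sin t)^m / (r * cos t - a j)) =
          (r\<^sup>2 - ?d\<^sup>2)^e * (jc ?d / sqrt (?d\<^sup>2 - r\<^sup>2)) + (-1) * (\<Sum>i<e. (r\<^sup>2 - ?d\<^sup>2)^(e-1-i) * (?d * (r^(2*i) * \<mu> i)))"
      proof -
        have "integral {0..2*pi} (\<lambda>t. (r * sin t)^(2*e) / (r * cos t - ?d))
          = (r\<^sup>2 - ?d\<^sup>2)^e * (jc ?d / sqrt (?d\<^sup>2 - r\<^sup>2))
            - (\<Sum>i<e. (r\<^sup>2 - ?d\<^sup>2)^(e-1-i) * (?d * (r^(2*i) * integral {0..2*pi} (\<lambda>t. cos t ^ 0 * sin t ^ (2*i)))))"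
          by (rule X_eval) (use r ra in auto)
        then show ?thesis unfolding e \<mu>_def by simp
      qed
    qed
  qed
qed

lemma ig_Z:
  shows "igood n K1 K2 a b \<rho> (\<lambda>r t. 1 / ((r * cos t - a j) * (r * sin t - b k)))"
  unfolding igood_def
proof (intro conjI allI impI)
  fix r :: real assume r: "0 < r \<and> r < \<rho>"
  show "(\<lambda>t. 1 / ((r * cos t - a j) * (r * sin t - b k))) integrable_on {0..2*pi}"
    by (intro integrable_continuous_real continuous_intros) (use nz_cos[of r "a j"] nz_sin[of r "b k"] r ra rb in auto)
next
  let ?c = "a j" and ?d = "b k"
  have gU: "goodf n K1 K2 a b \<rho> (\<lambda>r. poly [:- ?d * jc ?c:] (r\<^sup>2) / (?c\<^sup>2 + ?d\<^sup>2 - r\<^sup>2) * (1 / sqrt (?c\<^sup>2 - r\<^sup>2)))"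
    by (rule goodf_U[where p = "[:- ?d * jc ?c:]", OF jk]) auto
  have gV: "goodf n K1 K2 a b \<rho> (\<lambda>r. poly [:- ?c * jc ?d:] (r\<^sup>2) / (?c\<^sup>2 + ?d\<^sup>2 - r\<^sup>2) * (1 / sqrt (?d\<^sup>2 - r\<^sup>2)))"
    by (rule goodf_V[where p = "[:- ?c * jc ?d:]", OF jk]) auto
  show "goodf n K1 K2 a b \<rho> (\<lambda>r. integral {0..2 * pi} (\<lambda>t. 1 / ((r * cos t - a j) * (r * sin t - b k))))"
  proof (rule goodf_cong[OF goodf_add[OF gU gV]])
    fix r :: real assume r: "0 < r" "r < \<rho>"
    have Zv: "integral {0..2 * pi} (\<lambda>t. 1 / ((r * cos t - ?c) * (r * sin t - ?d)))
      = - (1 / (?c^2 + ?d^2 - r^2)) * (?c * (jc ?d / sqrt (?d\<^sup>2 - r\<^sup>2)) + ?d * (jc ?c / sqrt (?c\<^sup>2 - r\<^sup>2)))"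
      by (rule Z_eval) (use r ra rb in auto)
    show "integral {0..2 * pi} (\<lambda>t. 1 / ((r * cos t - a j) * (r * sin t - b k))) =
      poly [:- ?d * jc ?c:] (r\<^sup>2) / (?c\<^sup>2 + ?d\<^sup>2 - r\<^sup>2) * (1 / sqrt (?c\<^sup>2 - r\<^sup>2)) +
      poly [:- ?c * jc ?d:] (r\<^sup>2) / (?c\<^sup>2 + ?d\<^sup>2 - r\<^sup>2) * (1 / sqrt (?d\<^sup>2 - r\<^sup>2))"
      unfolding Zv by (simp add: divide_inverse algebra_simps)
  qed
qed

lemma ig_T:
  assumes "p + q \<le> n + 1"
  shows "igood n K1 K2 a b \<rho> (\<lambda>r t. (r * cos t)^p * (r * sin t)^q / ((r * cos t - a j) * (r * sin t - b k)))"
proof -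
  let ?c = "a j" and ?d = "b k"
  have g1: "igood n K1 K2 a b \<rho> (\<lambda>r t. \<Sum>m<p. \<Sum>h<q. (?c^(p - Suc m) * ?d^(q - Suc h)) * ((r * cos t)^m * (r * sin t)^h))"
    by (intro igood_sum igood_cmult ig_mom finite_lessThan) (use assms in auto)
  have g2: "igood n K1 K2 a b \<rho> (\<lambda>r t. ?d^q * (\<Sum>m<p. ?c^(p - Suc m) * ((r * cos t)^m / (r * sin t - ?d))))"
    by (intro igood_sum igood_cmult ig_Y finite_lessThan) (use assms in auto)
  have g3: "igood n K1 K2 a b \<rho> (\<lambda>r t. ?c^p * (\<Sum>h<q. ?d^(q - Suc h) * ((r * sin t)^h / (r * cos t - ?c))))"
    by (intro igood_sum igood_cmult ig_X finite_lessThan) (use assms in auto)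
  have g4: "igood n K1 K2 a b \<rho> (\<lambda>r t. (?c^p * ?d^q) * (1 / ((r * cos t - ?c) * (r * sin t - ?d))))"
    by (intro igood_cmult ig_Z)
  have G: "igood n K1 K2 a b \<rho> (\<lambda>r t. (\<Sum>m<p. \<Sum>h<q. (?c^(p - Suc m) * ?d^(q - Suc h)) * ((r * cos t)^m * (r * sin t)^h))
      + ?d^q * (\<Sum>m<p. ?c^(p - Suc m) * ((r * cos t)^m / (r * sin t - ?d)))
      + ?c^p * (\<Sum>h<q. ?d^(q - Suc h) * ((r * sin t)^h / (r * cos t - ?c)))
      + (?c^p * ?d^q) * (1 / ((r * cos t - ?c) * (r * sin t - ?d))))"
    by (intro igood_add g1 g2 g3 g4)
  show ?thesis
  proof (rule igood_cong[OF G])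
    fix r t :: real assume r: "0 < r" "r < \<rho>"
    define x where "x = r * cos t"
    define y where "y = r * sin t"
    have u: "x - ?c \<noteq> 0" unfolding x_def using nz_cos[of r ?c t] r ra by auto
    have v: "y - ?d \<noteq> 0" unfolding y_def using nz_sin[of r ?d t] r rb by auto
    define Sx where "Sx = (\<Sum>m<p. ?c^(p - Suc m) * x^m)"
    define Sy where "Sy = (\<Sum>h<q. ?d^(q - Suc h) * y^h)"
    have ex: "x^p = (x - ?c) * Sx + ?c^p" using power_diff_sumr2[of x p ?c] unfolding Sx_def by (simp add: algebra_simps)
    have ey: "y^q = (y - ?d) * Sy + ?d^q" using power_diff_sumr2[of y q ?d] unfolding Sy_def by (simp add: algebra_simps)
    have gen: "\<And>U V A B C D :: real. U \<noteq> 0 \<Longrightarrow> V \<noteq> 0 \<Longrightarrow>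
       (U * A + C) * (V * B + D) / (U * V) = A * B + D * (A / V) + C * (B / U) + (C * D) * (1 / (U * V))"
      by (simp add: field_simps)
    have "x^p * y^q / ((x - ?c) * (y - ?d)) = Sx * Sy + ?d^q * (Sx / (y - ?d)) + ?c^p * (Sy / (x - ?c)) + (?c^p * ?d^q) * (1 / ((x - ?c) * (y - ?d)))"
      unfolding ex ey by (rule gen[OF u v])
    also have "Sx * Sy = (\<Sum>m<p. \<Sum>h<q. (?c^(p - Suc m) * ?d^(q - Suc h)) * (x^m * y^h))"
      unfolding Sx_def Sy_def sum_product by (simp add: algebra_simps)
    also have "Sx / (y - ?d) = (\<Sum>m<p. ?c^(p - Suc m) * (x^m / (y - ?d)))"
      unfolding Sx_def sum_divide_distrib by simp
    also have "Sy / (x - ?c) = (\<Sum>h<q. ?d^(q - Suc h) * (y^h / (x - ?c)))"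
      unfolding Sy_def sum_divide_distrib by simp
    finally show "(r * cos t)^p * (r * sin t)^q / ((r * cos t - a j) * (r * sin t - b k)) =
      (\<Sum>m<p. \<Sum>h<q. (?c^(p - Suc m) * ?d^(q - Suc h)) * ((r * cos t)^m * (r * sin t)^h))
      + ?d^q * (\<Sum>m<p. ?c^(p - Suc m) * ((r * cos t)^m / (r * sin t - ?d)))
      + ?c^p * (\<Sum>h<q. ?d^(q - Suc h) * ((r * sin t)^h / (r * cos t - ?c)))
      + (?c^p * ?d^q) * (1 / ((r * cos t - ?c) * (r * sin t - ?d)))"
      unfolding x_def y_def .
  qed
qed
end


lemma pf_two:
  fixes x p q :: real
  assumes "x \<noteq> p" "x \<noteq> q" "p \<noteq> q"
  shows "1 / ((x - p) * (x - q)) = (1 / (p - q)) * (1 / (x - p)) - (1 / (p - q)) * (1 / (x - q))"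
proof -
  have gen: "\<And>u v w :: real. u \<noteq> 0 \<Longrightarrow> v \<noteq> 0 \<Longrightarrow> w \<noteq> 0 \<Longrightarrow>
     (1 / w) * (1 / u) - (1 / w) * (1 / v) = (v - u) / (w * (u * v))"
    by (simp add: field_simps)
  have "(1 / (p - q)) * (1 / (x - p)) - (1 / (p - q)) * (1 / (x - q)) = ((x - q) - (x - p)) / ((p - q) * ((x - p) * (x - q)))"
    by (rule gen) (use assms in auto)
  also have "(x - q) - (x - p) = p - q" by simp
  finally show ?thesis using assms by simp
qed

lemma pf_exists:
  fixes a :: "nat \<Rightarrow> real"
  assumes "finite J" "J \<noteq> {}" "inj_on a J"
  shows "\<exists>\<alpha>. \<forall>x. (\<forall>j\<in>J. x \<noteq> a j) \<longrightarrow> 1 / (\<Prod>j\<in>J. x - a j) = (\<Sum>j\<in>J. \<alpha> j / (x - a j))"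
  using assms
proof (induction J rule: finite_ne_induct)
  case (singleton i)
  show ?case by (rule exI[of _ "\<lambda>_. 1"]) simp
next
  case (insert i J)
  from insert.IH insert.prems obtain \<alpha> where \<alpha>: "\<And>x. (\<forall>j\<in>J. x \<noteq> a j) \<Longrightarrow> 1 / (\<Prod>j\<in>J. x - a j) = (\<Sum>j\<in>J. \<alpha> j / (x - a j))"
    by (auto simp: inj_on_insert)
  have ne: "a i \<noteq> a j" if "j \<in> J" for j
    using insert.prems insert.hyps that by (auto simp: inj_on_def)
  define \<beta> where "\<beta> l = (if l = i then (\<Sum>j\<in>J. \<alpha> j * (1 / (a i - a j))) else - (\<alpha> l * (1 / (a i - a l))))" for l
  show ?case
  proof (rule exI[of _ \<beta>], intro allI impI)
    fix x assume x: "\<forall>j\<in>insert i J. x \<noteq> a j"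
    have "1 / (\<Prod>j\<in>insert i J. x - a j) = (1 / (x - a i)) * (1 / (\<Prod>j\<in>J. x - a j))"
      using insert.hyps by simp
    also have "\<dots> = (\<Sum>j\<in>J. \<alpha> j * (1 / ((x - a i) * (x - a j))))"
    proof -
      have xJ: "\<forall>j\<in>J. x \<noteq> a j" using x by auto
      have "(1 / (x - a i)) * (1 / (\<Prod>j\<in>J. x - a j)) = (1 / (x - a i)) * (\<Sum>j\<in>J. \<alpha> j / (x - a j))"
        using \<alpha>[OF xJ] by simp
      also have "\<dots> = (\<Sum>j\<in>J. \<alpha> j * (1 / ((x - a i) * (x - a j))))"
        unfolding sum_distrib_left by (rule sum.cong) simp_all
      finally show ?thesis .
    qed
    also have "\<dots> = (\<Sum>j\<in>J. \<alpha> j * (1 / (a i - a j)) * (1 / (x - a i)) - \<alpha> j * (1 / (a i - a j)) * (1 / (x - a j)))"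
    proof (rule sum.cong[OF refl])
      fix j assume j: "j \<in> J"
      show "\<alpha> j * (1 / ((x - a i) * (x - a j))) = \<alpha> j * (1 / (a i - a j)) * (1 / (x - a i)) - \<alpha> j * (1 / (a i - a j)) * (1 / (x - a j))"
      proof -
        have h: "1 / ((x - a i) * (x - a j)) = (1 / (a i - a j)) * (1 / (x - a i)) - (1 / (a i - a j)) * (1 / (x - a j))"
          by (rule pf_two) (use x j ne[OF j] in auto)
        show ?thesis unfolding h by (simp only: right_diff_distrib mult.assoc)
      qed
    qed
    also have "\<dots> = \<beta> i / (x - a i) + (\<Sum>j\<in>J. \<beta> j / (x - a j))"
    proof -
      have "(\<Sum>j\<in>J. \<beta> j / (x - a j)) = (\<Sum>j\<in>J. - (\<alpha> j * (1 / (a i - a j)) * (1 / (x - a j))))"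
        by (rule sum.cong[OF refl]) (use insert.hyps in \<open>auto simp: \<beta>_def\<close>)
      then show ?thesis unfolding sum_subtractf \<beta>_def by (simp add: sum_distrib_right sum_negf sum_divide_distrib divide_divide_eq_left)
    qed
    also have "\<dots> = (\<Sum>j\<in>insert i J. \<beta> j / (x - a j))"
      using insert.hyps by simp
    finally show "1 / (\<Prod>j\<in>insert i J. x - a j) = (\<Sum>j\<in>insert i J. \<beta> j / (x - a j))" .
  qed
qed

lemma decomp:
  fixes X Y :: real and a b \<alpha> \<beta> :: "nat \<Rightarrow> real" and P Q :: "nat \<Rightarrow> nat \<Rightarrow> real"
  assumes X: "\<forall>j\<in>{1..K1}. X \<noteq> a j" and Y: "\<forall>k\<in>{1..K2}. Y \<noteq> b k"
    and \<alpha>: "1 / (\<Prod>j=1..K1. X - a j) = (\<Sum>j=1..K1. \<alpha> j / (X - a j))"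
    and \<beta>: "1 / (\<Prod>k=1..K2. Y - b k) = (\<Sum>k=1..K2. \<beta> k / (Y - b k))"
  shows "(bipoly_eval n Q X Y * (- Y) - bipoly_eval n P X Y * X) / ((\<Prod>j=1..K1. X - a j) * (\<Prod>k=1..K2. Y - b k))
   = (\<Sum>j=1..K1. \<Sum>k=1..K2. (\<alpha> j * \<beta> k) * (\<Sum>i\<le>n. \<Sum>l\<le>n-i.
        (- Q i l) * (X^i * Y^(l+1) / ((X - a j) * (Y - b k))) + (- P i l) * (X^(i+1) * Y^l / ((X - a j) * (Y - b k)))))"
proof -
  define N where "N = (\<Sum>i\<le>n. \<Sum>l\<le>n-i. (- Q i l) * (X^i * Y^(l+1)) + (- P i l) * (X^(i+1) * Y^l))"
  have N: "bipoly_eval n Q X Y * (- Y) - bipoly_eval n P X Y * X = N"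
  proof -
    have "N = (\<Sum>i\<le>n. \<Sum>l\<le>n-i. Q i l * X ^ i * Y ^ l * (- Y) - P i l * X ^ i * Y ^ l * X)"
      unfolding N_def by (intro sum.cong refl) (simp add: algebra_simps)
    also have "\<dots> = bipoly_eval n Q X Y * (- Y) - bipoly_eval n P X Y * X"
      unfolding bipoly_eval_def by (simp add: sum_subtractf sum_distrib_right sum_negf)
    finally show ?thesis by simp
  qed
  have D: "1 / ((\<Prod>j=1..K1. X - a j) * (\<Prod>k=1..K2. Y - b k))
      = (\<Sum>j=1..K1. \<Sum>k=1..K2. (\<alpha> j * \<beta> k) * (1 / ((X - a j) * (Y - b k))))"
  proof -
    have "1 / ((\<Prod>j=1..K1. X - a j) * (\<Prod>k=1..K2. Y - b k)) = (1 / (\<Prod>j=1..K1. X - a j)) * (1 / (\<Prod>k=1..K2. Y - b k))"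
      by simp
    also have "\<dots> = (\<Sum>j=1..K1. \<Sum>k=1..K2. (\<alpha> j / (X - a j)) * (\<beta> k / (Y - b k)))"
      unfolding \<alpha> \<beta> sum_product ..
    also have "\<dots> = (\<Sum>j=1..K1. \<Sum>k=1..K2. (\<alpha> j * \<beta> k) * (1 / ((X - a j) * (Y - b k))))"
      by (intro sum.cong refl) simp
    finally show ?thesis .
  qed
  have "(bipoly_eval n Q X Y * (- Y) - bipoly_eval n P X Y * X) / ((\<Prod>j=1..K1. X - a j) * (\<Prod>k=1..K2. Y - b k))
      = N * (1 / ((\<Prod>j=1..K1. X - a j) * (\<Prod>k=1..K2. Y - b k)))" unfolding N by simp
  also have "\<dots> = (\<Sum>j=1..K1. \<Sum>k=1..K2. (\<alpha> j * \<beta> k) * (N * (1 / ((X - a j) * (Y - b k)))))"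
    unfolding D sum_distrib_left by (intro sum.cong refl) (simp add: algebra_simps)
  also have "\<dots> = (\<Sum>j=1..K1. \<Sum>k=1..K2. (\<alpha> j * \<beta> k) * (\<Sum>i\<le>n. \<Sum>l\<le>n-i.
        (- Q i l) * (X^i * Y^(l+1) / ((X - a j) * (Y - b k))) + (- P i l) * (X^(i+1) * Y^l / ((X - a j) * (Y - b k)))))"
    unfolding N_def sum_distrib_right by (intro sum.cong refl) (simp add: algebra_simps)
  finally show ?thesis .
qed

theorem proposition2p4:
  fixes K1 K2 n :: nat
    and P Q :: "nat \<Rightarrow> nat \<Rightarrow> real"
    and a b :: "nat \<Rightarrow> real"
  assumes "K1 \<ge> 1" and "K2 \<ge> 1"
    and "\<forall>j\<in>{1..K1}. a j \<noteq> 0" and "\<forall>k\<in>{1..K2}. b k \<noteq> 0"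
    and "inj_on a {1..K1}" and "inj_on b {1..K2}"
  defines "\<rho> \<equiv> Min ((\<lambda>j. \<bar>a j\<bar>) ` {1..K1} \<union> (\<lambda>k. \<bar>b k\<bar>) ` {1..K2})"
  shows "\<exists>(U :: nat \<Rightarrow> nat \<Rightarrow> real poly) (V :: nat \<Rightarrow> nat \<Rightarrow> real poly) (W :: real poly).
           (\<forall>j\<in>{1..K1}. \<forall>k\<in>{1..K2}. degree (U j k) \<le> n div 2 + 1 \<and> degree (V j k) \<le> n div 2 + 1)
         \<and> (if n = 0 then W = 0 else degree W \<le> (n - 1) div 2)
         \<and> (\<forall>r. 0 < r \<and> r < \<rho> \<longrightarrow>
              circle_integral_I n P Q K1 K2 a b r =
                (\<Sum>j=1..K1. (\<Sum>k=1..K2. poly (U j k) (r\<^sup>2) / ((a j)\<^sup>2 + (b k)\<^sup>2 - r\<^sup>2))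
                              * (1 / sqrt ((a j)\<^sup>2 - r\<^sup>2)))
              + (\<Sum>k=1..K2. (\<Sum>j=1..K1. poly (V j k) (r\<^sup>2) / ((a j)\<^sup>2 + (b k)\<^sup>2 - r\<^sup>2))
                              * (1 / sqrt ((b k)\<^sup>2 - r\<^sup>2)))
              + poly W (r\<^sup>2))"
proof -
  have fa: "finite {1..K1}" "{1..K1} \<noteq> {}" using assms(1) by auto
  have fb: "finite {1..K2}" "{1..K2} \<noteq> {}" using assms(2) by auto
  obtain \<alpha> where \<alpha>: "\<forall>x. (\<forall>j\<in>{1..K1}. x \<noteq> a j) \<longrightarrow> 1 / (\<Prod>j\<in>{1..K1}. x - a j) = (\<Sum>j\<in>{1..K1}. \<alpha> j / (x - a j))"
    using pf_exists[OF fa assms(5)] by blast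
  obtain \<beta> where \<beta>: "\<forall>x. (\<forall>k\<in>{1..K2}. x \<noteq> b k) \<longrightarrow> 1 / (\<Prod>k\<in>{1..K2}. x - b k) = (\<Sum>k\<in>{1..K2}. \<beta> k / (x - b k))"
    using pf_exists[OF fb assms(6)] by blast
  have ra: "\<rho> \<le> \<bar>a j\<bar>" if "j \<in> {1..K1}" for j
    unfolding \<rho>_def by (rule Min_le) (use that in auto)
  have rb: "\<rho> \<le> \<bar>b k\<bar>" if "k \<in> {1..K2}" for k
    unfolding \<rho>_def by (rule Min_le) (use that in auto)
  define G where "G = (\<lambda>r t. \<Sum>j=1..K1. \<Sum>k=1..K2. (\<alpha> j * \<beta> k) * (\<Sum>i\<le>n. \<Sum>l\<le>n-i.
        (- Q i l) * ((r * cos t)^i * (r * sin t)^(l+1) / ((r * cos t - a j) * (r * sin t - b k)))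
        + (- P i l) * ((r * cos t)^(i+1) * (r * sin t)^l / ((r * cos t - a j) * (r * sin t - b k)))))"
  have "igood n K1 K2 a b \<rho> G" unfolding G_def
    by (intro igood_sum igood_cmult igood_add ig_T finite_atLeastAtMost finite_atMost) (auto simp: ra rb)
  then have g: "goodf n K1 K2 a b \<rho> (\<lambda>r. integral {0..2*pi} (G r))" unfolding igood_def by simp
  have "goodf n K1 K2 a b \<rho> (\<lambda>r. circle_integral_I n P Q K1 K2 a b r)"
  proof (rule goodf_cong[OF g])
    fix r :: real assume r: "0 < r" "r < \<rho>"
    show "circle_integral_I n P Q K1 K2 a b r = integral {0..2*pi} (G r)" unfolding circle_integral_I_def
    proof (rule integral_cong)
      fix t
      have X: "\<forall>j\<in>{1..K1}. r * cos t \<noteq> a j" using nz_cos'[of r] ra r by (meson less_eq_real_def less_le_trans)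
      have Y: "\<forall>k\<in>{1..K2}. r * sin t \<noteq> b k" using nz_sin'[of r] rb r by (meson less_eq_real_def less_le_trans)
      have "(bipoly_eval n Q (r * cos t) (r * sin t) * (- r * sin t) - bipoly_eval n P (r * cos t) (r * sin t) * (r * cos t)) /
         ((\<Prod>j = 1..K1. r * cos t - a j) * (\<Prod>k = 1..K2. r * sin t - b k))
        = (bipoly_eval n Q (r * cos t) (r * sin t) * (- (r * sin t)) - bipoly_eval n P (r * cos t) (r * sin t) * (r * cos t)) /
         ((\<Prod>j = 1..K1. r * cos t - a j) * (\<Prod>k = 1..K2. r * sin t - b k))" by simp
      also have "\<dots> = G r t" unfolding G_def
        by (rule decomp[OF X Y]) (use \<alpha> \<beta> X Y in auto)
      finally show "(bipoly_eval n Q (r * cos t) (r * sin t) * (- r * sin t) - bipoly_eval n P (r * cos t) (r * sin t) * (r * cos t)) /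
         ((\<Prod>j = 1..K1. r * cos t - a j) * (\<Prod>k = 1..K2. r * sin t - b k)) = G r t" .
    qed
  qed
  then show ?thesis unfolding goodf_def degok_def gform_def by auto
qed

end
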